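(* Let $n_1,\dots,n_m$ be positive integers, $n=\prod_j n_j$, $\Omega=\times_{j=1}^m\{x\in\mathbb{C}^{n_j}:x^\dagger x=1\}$, and let $\mathcal{L}_R=\{g_G(x_1,\dots,x_m)=(\otimes_j x_j)^\dagger G(\otimes_j x_j): G\ \text{an } n\times n\text{ Hermitian matrix}\}$, a real vector space of real functions on $\Omega$. Let $\Sigma^{\geq}=\{g_G: G\succeq0\}$ and $\Sigma^{<}=\{g_G: G\prec 0\}$. Let $\mathscr{C}\subseteq\mathcal{L}_R$ be a P-coherent set of desirable gambles, i.e. a closed convex cone with $\Sigma^{\geq}\subseteq\mathscr{C}$ and $\mathscr{C}\cap\Sigma^{<}=\emptyset$. For a linear functional $L$ on $\mathcal{L}_R$ define the Hermitian matrix $Z=L\big((\otimes_j x_j)(\otimes_j x_j)^\dagger\big)$ (entrywise, $L$ extended complex-linearly), so that $L(g_G)=\operatorname{Tr}(GZ)$. Then the dual cone $\mathscr{C}^\circ=\{L: L(g)\ge0\ \forall g\in\mathscr{C}\}$ equals the set of those $L$ whose matrix $Z$ satisfies $Z\succeq0$ and $\operatorname{Tr}(GZ)\ge0$ for all $g_G\in\mathscr{C}$.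
   Context: $G\succeq0$ means positive semidefinite, $G\prec0$ negative definite. *)

theory Defs
  imports "HOL-Analysis.Analysis"
begin

(* Multi-indices of the tensor product C^{n_0} (x) ... (x) C^{n_(m-1)}:
   i j < n j for j < m; dimension = prod_j n j *)
definition Idx :: "nat \<Rightarrow> (nat \<Rightarrow> nat) \<Rightarrow> (nat \<Rightarrow> nat) set" where
  "Idx m n = (\<Pi>\<^sub>E j\<in>{..<m}. {..<n j})"

definition Omega :: "nat \<Rightarrow> (nat \<Rightarrow> nat) \<Rightarrow> (nat \<Rightarrow> nat \<Rightarrow> complex) set" where
  "Omega m n = (\<Pi>\<^sub>E j\<in>{..<m}.
      {v \<in> (\<Pi>\<^sub>E a\<in>{..<n j}. UNIV). (\<Sum>a<n j. cnj (v a) * v a) = 1})"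

definition tens :: "nat \<Rightarrow> (nat \<Rightarrow> nat \<Rightarrow> complex) \<Rightarrow> (nat \<Rightarrow> nat) \<Rightarrow> complex" where
  "tens m x i = (\<Prod>j<m. x j (i j))"

type_synonym mat = "(nat \<Rightarrow> nat) \<Rightarrow> (nat \<Rightarrow> nat) \<Rightarrow> complex"
type_synonym gamble = "(nat \<Rightarrow> nat \<Rightarrow> complex) \<Rightarrow> real"

definition hermitian :: "nat \<Rightarrow> (nat \<Rightarrow> nat) \<Rightarrow> mat \<Rightarrow> bool" where
  "hermitian m n G = (\<forall>i\<in>Idx m n. \<forall>k\<in>Idx m n. G i k = cnj (G k i))"

definition quad :: "nat \<Rightarrow> (nat \<Rightarrow> nat) \<Rightarrow> mat \<Rightarrow> ((nat \<Rightarrow> nat) \<Rightarrow> complex) \<Rightarrow> complex" where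
  "quad m n G v = (\<Sum>i\<in>Idx m n. \<Sum>k\<in>Idx m n. cnj (v i) * G i k * v k)"

definition psd :: "nat \<Rightarrow> (nat \<Rightarrow> nat) \<Rightarrow> mat \<Rightarrow> bool" where
  "psd m n G = (hermitian m n G \<and> (\<forall>v. 0 \<le> Re (quad m n G v)))"

definition negdef :: "nat \<Rightarrow> (nat \<Rightarrow> nat) \<Rightarrow> mat \<Rightarrow> bool" where
  "negdef m n G = (hermitian m n G \<and>
     (\<forall>v. (\<exists>i\<in>Idx m n. v i \<noteq> 0) \<longrightarrow> Re (quad m n G v) < 0))"

definition gG :: "nat \<Rightarrow> (nat \<Rightarrow> nat) \<Rightarrow> mat \<Rightarrow> gamble" where
  "gG m n G = (\<lambda>x. if x \<in> Omega m n then
      Re (\<Sum>i\<in>Idx m n. \<Sum>k\<in>Idx m n. cnj (tens m x i) * G i k * tens m x k) else 0)"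

definition LR :: "nat \<Rightarrow> (nat \<Rightarrow> nat) \<Rightarrow> gamble set" where
  "LR m n = {gG m n G | G. hermitian m n G}"

definition SigmaGe :: "nat \<Rightarrow> (nat \<Rightarrow> nat) \<Rightarrow> gamble set" where
  "SigmaGe m n = {gG m n G | G. psd m n G}"

definition SigmaLt :: "nat \<Rightarrow> (nat \<Rightarrow> nat) \<Rightarrow> gamble set" where
  "SigmaLt m n = {gG m n G | G. negdef m n G}"

definition is_convex_cone :: "gamble set \<Rightarrow> bool" where
  "is_convex_cone C = (C \<noteq> {} \<and>
     (\<forall>f\<in>C. \<forall>g\<in>C. \<forall>a b::real. a \<ge> 0 \<longrightarrow> b \<ge> 0 \<longrightarrow> (\<lambda>x. a * f x + b * g x) \<in> C))"

(* closedness w.r.t. the (product) topology on functions; on the finite-dimensional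
   space LR this is the usual topology *)
definition P_coherent :: "nat \<Rightarrow> (nat \<Rightarrow> nat) \<Rightarrow> gamble set \<Rightarrow> bool" where
  "P_coherent m n C = (C \<subseteq> LR m n \<and> closed C \<and> is_convex_cone C \<and>
     SigmaGe m n \<subseteq> C \<and> C \<inter> SigmaLt m n = {})"

definition linear_on :: "gamble set \<Rightarrow> (gamble \<Rightarrow> real) \<Rightarrow> bool" where
  "linear_on V L = (\<forall>f\<in>V. \<forall>g\<in>V. \<forall>a b::real.
      L (\<lambda>x. a * f x + b * g x) = a * L f + b * L g)"

definition entry_re :: "nat \<Rightarrow> (nat \<Rightarrow> nat) \<Rightarrow> (nat \<Rightarrow> nat) \<Rightarrow> (nat \<Rightarrow> nat) \<Rightarrow> gamble" where
  "entry_re m n i k = (\<lambda>x. if x \<in> Omega m n then Re (tens m x i * cnj (tens m x k)) else 0)"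

definition entry_im :: "nat \<Rightarrow> (nat \<Rightarrow> nat) \<Rightarrow> (nat \<Rightarrow> nat) \<Rightarrow> (nat \<Rightarrow> nat) \<Rightarrow> gamble" where
  "entry_im m n i k = (\<lambda>x. if x \<in> Omega m n then Im (tens m x i * cnj (tens m x k)) else 0)"

(* Z = L((tens x)(tens x)^dagger), L extended complex-linearly *)
definition Zmat :: "nat \<Rightarrow> (nat \<Rightarrow> nat) \<Rightarrow> (gamble \<Rightarrow> real) \<Rightarrow> mat" where
  "Zmat m n L = (\<lambda>i k. complex_of_real (L (entry_re m n i k))
                      + \<i> * complex_of_real (L (entry_im m n i k)))"

definition trace_prod :: "nat \<Rightarrow> (nat \<Rightarrow> nat) \<Rightarrow> mat \<Rightarrow> mat \<Rightarrow> complex" where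
  "trace_prod m n G Z = (\<Sum>i\<in>Idx m n. \<Sum>k\<in>Idx m n. G i k * Z k i)"

definition dual_cone :: "nat \<Rightarrow> (nat \<Rightarrow> nat) \<Rightarrow> gamble set \<Rightarrow> (gamble \<Rightarrow> real) set" where
  "dual_cone m n C = {L. linear_on (LR m n) L \<and> (\<forall>g\<in>C. 0 \<le> L g)}"

end

theory Submission
  imports Defs
begin

lemma finite_Idx: "finite (Idx m n)"
  unfolding Idx_def by (simp add: finite_PiE)

lemma gG_lin: "gG m n (\<lambda>i k. of_real a * G1 i k + of_real b * G2 i k) = (\<lambda>x. a * gG m n G1 x + b * gG m n G2 x)"
  unfolding gG_def
  by (rule ext) (simp add: algebra_simps sum.distrib sum_distrib_left)

lemma LR_lin:
  assumes "f \<in> LR m n" "g \<in> LR m n"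
  shows "(\<lambda>x. a * f x + b * g x) \<in> LR m n"
proof -
  obtain G1 where G1: "hermitian m n G1" "f = gG m n G1" using assms(1) unfolding LR_def by blast
  obtain G2 where G2: "hermitian m n G2" "g = gG m n G2" using assms(2) unfolding LR_def by blast
  define G3 where "G3 = (\<lambda>i k. of_real a * G1 i k + of_real b * G2 i k)"
  have h: "hermitian m n G3"
    unfolding hermitian_def
  proof (intro ballI)
    fix i k assume i: "i \<in> Idx m n" and k: "k \<in> Idx m n"
    have e1: "G1 i k = cnj (G1 k i)" using G1(1) i k unfolding hermitian_def by blast
    have e2: "G2 i k = cnj (G2 k i)" using G2(1) i k unfolding hermitian_def by blast
    show "G3 i k = cnj (G3 k i)" unfolding G3_def by (subst e1, subst e2, simp)
  qed
  have e: "(\<lambda>x. a * f x + b * g x) = gG m n G3"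
    unfolding G3_def gG_lin G1(2) G2(2) ..
  have "gG m n G3 \<in> LR m n" unfolding LR_def using h by blast
  then show ?thesis unfolding e .
qed

lemma zero_LR: "(\<lambda>x. 0) \<in> LR m n"
proof -
  have e: "gG m n (\<lambda>i k. 0) = (\<lambda>x. 0)" unfolding gG_def by auto
  have h: "hermitian m n (\<lambda>i k. 0)" unfolding hermitian_def by simp
  have "gG m n (\<lambda>i k. 0) \<in> LR m n" unfolding LR_def using h by blast
  then show ?thesis unfolding e .
qed

lemma L_lin:
  assumes "linear_on (LR m n) L" "f \<in> LR m n" "g \<in> LR m n"
  shows "L (\<lambda>x. a * f x + b * g x) = a * L f + b * L g"
proof -
  have 1: "\<forall>f\<in>LR m n. \<forall>g\<in>LR m n. \<forall>a b. L (\<lambda>x. a * f x + b * g x) = a * L f + b * L g"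
    using assms(1) unfolding linear_on_def .
  show ?thesis by (rule spec[OF spec[OF bspec[OF bspec[OF 1 assms(2)] assms(3)]]])
qed

lemma L_zero:
  assumes "linear_on (LR m n) L"
  shows "L (\<lambda>x. 0) = 0"
  using L_lin[OF assms zero_LR zero_LR, of 0 0] by simp

lemma L_sum:
  assumes "linear_on (LR m n) L" "finite S" "\<forall>s\<in>S. f s \<in> LR m n"
  shows "(\<lambda>x. \<Sum>s\<in>S. f s x) \<in> LR m n \<and> L (\<lambda>x. \<Sum>s\<in>S. f s x) = (\<Sum>s\<in>S. L (f s))"
  using assms(2,3)
proof (induction S rule: finite_induct)
  case empty
  then show ?case using zero_LR L_zero[OF assms(1)] by simp
next
  case (insert a F)
  have fa: "f a \<in> LR m n" using insert by simp
  have IH: "(\<lambda>x. \<Sum>s\<in>F. f s x) \<in> LR m n" "L (\<lambda>x. \<Sum>s\<in>F. f s x) = (\<Sum>s\<in>F. L (f s))"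
    using insert by auto
  have eq: "(\<lambda>x. \<Sum>s\<in>insert a F. f s x) = (\<lambda>x. 1 * f a x + 1 * (\<Sum>s\<in>F. f s x))"
    using insert by simp
  have A: "L (\<lambda>x. 1 * f a x + 1 * (\<Sum>s\<in>F. f s x)) = 1 * L (f a) + 1 * L (\<lambda>x. \<Sum>s\<in>F. f s x)"
    by (rule L_lin[OF assms(1) fa IH(1)])
  have B: "(\<Sum>s\<in>insert a F. L (f s)) = 1 * L (f a) + 1 * L (\<lambda>x. \<Sum>s\<in>F. f s x)"
    using IH(2) insert(1,2) by simp
  show ?case unfolding eq
  proof (rule conjI)
    show "(\<lambda>x. 1 * f a x + 1 * (\<Sum>s\<in>F. f s x)) \<in> LR m n" by (rule LR_lin[OF fa IH(1)])
    show "L (\<lambda>x. 1 * f a x + 1 * (\<Sum>s\<in>F. f s x)) = (\<Sum>s\<in>insert a F. L (f s))"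
      unfolding A B ..
  qed
qed

definition E :: "(nat \<Rightarrow> nat) \<Rightarrow> (nat \<Rightarrow> nat) \<Rightarrow> mat" where
  "E a b = (\<lambda>p q. if p = a \<and> q = b then 1 else 0)"

lemma sum_E:
  assumes "finite S" "a \<in> S" "b \<in> S"
  shows "(\<Sum>p\<in>S. \<Sum>q\<in>S. cnj (u p) * E a b p q * u q) = cnj (u a) * u b"
proof -
  have "(\<Sum>q\<in>S. cnj (u p) * E a b p q * u q) = (if p = a then cnj (u a) * u b else 0)" for p
  proof (cases "p = a")
    case True
    have "(\<Sum>q\<in>S. cnj (u p) * E a b p q * u q) = (\<Sum>q\<in>S. if q = b then cnj (u a) * u b else 0)"
      by (rule sum.cong) (auto simp: E_def True)
    then show ?thesis using assms True by simp
  next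
    case False
    then show ?thesis by (simp add: E_def)
  qed
  then show ?thesis using assms by simp
qed

lemma cnjE: "cnj (E a b p q) = E a b p q" by (simp add: E_def)
lemma ET: "E a b p q = E b a q p" by (auto simp add: E_def)

lemma re_id: "Re ((1/2) * (cnj b * a) + (1/2) * (cnj a * b)) = Re (a * cnj b)" by (simp add: field_simps)
lemma im_id: "Re ((\<i> / 2) * (cnj a * b) + (- \<i> / 2) * (cnj b * a)) = Im (a * cnj b)" by (simp add: field_simps)

lemma quad_lin:
  "(\<Sum>p\<in>S. \<Sum>q\<in>S. cnj (u p) * (c * A p q + d * B p q) * u q)
   = c * (\<Sum>p\<in>S. \<Sum>q\<in>S. cnj (u p) * A p q * u q) + d * (\<Sum>p\<in>S. \<Sum>q\<in>S. cnj (u p) * B p q * u q)"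
  by (simp add: algebra_simps sum.distrib sum_distrib_left)

lemma tens_in_LR_re:
  assumes i: "i \<in> Idx m n" and k: "k \<in> Idx m n"
  shows "entry_re m n i k \<in> LR m n"
proof -
  define G :: mat where "G = (\<lambda>p q. (1/2) * E k i p q + (1/2) * E i k p q)"
  have h: "hermitian m n G" unfolding hermitian_def G_def
    by (simp add: cnjE) (metis ET add.commute)
  have "gG m n G = entry_re m n i k"
  proof (rule ext)
    fix x
    show "gG m n G x = entry_re m n i k x"
    proof (cases "x \<in> Omega m n")
      case True
      have "(\<Sum>p\<in>Idx m n. \<Sum>q\<in>Idx m n. cnj (tens m x p) * G p q * tens m x q)
          = (1/2) * (cnj (tens m x k) * tens m x i) + (1/2) * (cnj (tens m x i) * tens m x k)"
        unfolding G_def quad_lin sum_E[OF finite_Idx i k] sum_E[OF finite_Idx k i] ..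
      moreover have "gG m n G x = Re (\<Sum>p\<in>Idx m n. \<Sum>q\<in>Idx m n. cnj (tens m x p) * G p q * tens m x q)"
        using True unfolding gG_def by simp
      ultimately show ?thesis using True unfolding entry_re_def by (simp only: re_id if_True)
    next
      case False
      then show ?thesis unfolding gG_def entry_re_def by simp
    qed
  qed
  moreover have "gG m n G \<in> LR m n" unfolding LR_def using h by blast
  ultimately show ?thesis by simp
qed

lemma tens_in_LR_im:
  assumes i: "i \<in> Idx m n" and k: "k \<in> Idx m n"
  shows "entry_im m n i k \<in> LR m n"
proof -
  define G :: mat where "G = (\<lambda>p q. (\<i> / 2) * E i k p q + (- \<i> / 2) * E k i p q)"
  have h: "hermitian m n G" unfolding hermitian_def G_def
  proof (intro ballI)
    fix p q
    have "cnj ((\<i> / 2) * E i k q p + (- \<i> / 2) * E k i q p) = (- \<i> / 2) * E i k q p + (\<i> / 2) * E k i q p"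
      by (simp add: cnjE)
    also have "\<dots> = (\<i> / 2) * E i k p q + (- \<i> / 2) * E k i p q"
      using ET[of i k q p] ET[of k i q p] by simp
    finally show "(\<i> / 2) * E i k p q + (- \<i> / 2) * E k i p q = cnj ((\<i> / 2) * E i k q p + (- \<i> / 2) * E k i q p)" by simp
  qed
  have "gG m n G = entry_im m n i k"
  proof (rule ext)
    fix x
    show "gG m n G x = entry_im m n i k x"
    proof (cases "x \<in> Omega m n")
      case True
      have "(\<Sum>p\<in>Idx m n. \<Sum>q\<in>Idx m n. cnj (tens m x p) * G p q * tens m x q)
          = (\<i> / 2) * (cnj (tens m x i) * tens m x k) + (- \<i> / 2) * (cnj (tens m x k) * tens m x i)"
        unfolding G_def quad_lin sum_E[OF finite_Idx i k] sum_E[OF finite_Idx k i] ..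
      moreover have "gG m n G x = Re (\<Sum>p\<in>Idx m n. \<Sum>q\<in>Idx m n. cnj (tens m x p) * G p q * tens m x q)"
        using True unfolding gG_def by simp
      ultimately show ?thesis using True unfolding entry_im_def by (simp only: im_id if_True)
    next
      case False
      then show ?thesis unfolding gG_def entry_im_def by simp
    qed
  qed
  moreover have "gG m n G \<in> LR m n" unfolding LR_def using h by blast
  ultimately show ?thesis by simp
qed

lemma L_gG:
  assumes "linear_on (LR m n) L"
  shows "L (gG m n G) = Re (trace_prod m n G (Zmat m n L))"
proof -
  define h where "h = (\<lambda>(i,k). \<lambda>x. Re (G i k) * entry_re m n k i x + (- Im (G i k)) * entry_im m n k i x)"
  have hLR: "\<forall>p\<in>Idx m n \<times> Idx m n. h p \<in> LR m n"
  proof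
    fix p assume "p \<in> Idx m n \<times> Idx m n"
    then obtain i k where p: "p = (i,k)" and i: "i \<in> Idx m n" and k: "k \<in> Idx m n" by auto
    show "h p \<in> LR m n" unfolding h_def p
      using LR_lin[OF tens_in_LR_re[OF k i] tens_in_LR_im[OF k i], of "Re (G i k)" "- Im (G i k)"] by simp
  qed
  have hL: "L (h p) = Re (G (fst p) (snd p) * Zmat m n L (snd p) (fst p))" if "p \<in> Idx m n \<times> Idx m n" for p
  proof -
    obtain i k where p: "p = (i,k)" and i: "i \<in> Idx m n" and k: "k \<in> Idx m n" using \<open>p \<in> Idx m n \<times> Idx m n\<close> by auto
    have "L (h p) = Re (G i k) * L (entry_re m n k i) + (- Im (G i k)) * L (entry_im m n k i)"
      unfolding p h_def using L_lin[OF assms tens_in_LR_re[OF k i] tens_in_LR_im[OF k i], of "Re (G i k)" "- Im (G i k)"] by simp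
    then show ?thesis unfolding p Zmat_def by simp
  qed
  have eq: "gG m n G = (\<lambda>x. \<Sum>p\<in>Idx m n \<times> Idx m n. h p x)"
  proof (rule ext)
    fix x
    show "gG m n G x = (\<Sum>p\<in>Idx m n \<times> Idx m n. h p x)"
    proof (cases "x \<in> Omega m n")
      case True
      have "gG m n G x = (\<Sum>i\<in>Idx m n. \<Sum>k\<in>Idx m n. Re (cnj (tens m x i) * G i k * tens m x k))"
        using True unfolding gG_def by (simp add: Re_sum)
      also have "\<dots> = (\<Sum>p\<in>Idx m n \<times> Idx m n. Re (cnj (tens m x (fst p)) * G (fst p) (snd p) * tens m x (snd p)))"
        by (simp add: sum.cartesian_product case_prod_beta)
      also have "\<dots> = (\<Sum>p\<in>Idx m n \<times> Idx m n. h p x)"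
        by (rule sum.cong) (auto simp: h_def entry_re_def entry_im_def True algebra_simps)
      finally show ?thesis .
    next
      case False
      then show ?thesis unfolding gG_def h_def entry_re_def entry_im_def by (simp add: case_prod_beta)
    qed
  qed
  have "L (gG m n G) = (\<Sum>p\<in>Idx m n \<times> Idx m n. L (h p))"
    unfolding eq using L_sum[OF assms _ hLR] finite_Idx by auto
  also have "\<dots> = (\<Sum>p\<in>Idx m n \<times> Idx m n. Re (G (fst p) (snd p) * Zmat m n L (snd p) (fst p)))"
    using hL by (rule sum.cong[OF refl])
  also have "\<dots> = Re (trace_prod m n G (Zmat m n L))"
    unfolding trace_prod_def by (simp add: Re_sum sum.cartesian_product case_prod_beta)
  finally show ?thesis .
qed

lemma outer_psd: "psd m n (\<lambda>p q. v p * cnj (v q))"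
proof -
  have "hermitian m n (\<lambda>p q. v p * cnj (v q))" unfolding hermitian_def by simp
  moreover have "0 \<le> Re (quad m n (\<lambda>p q. v p * cnj (v q)) w)" for w
  proof -
    define s where "s = (\<Sum>i\<in>Idx m n. cnj (w i) * v i)"
    have "quad m n (\<lambda>p q. v p * cnj (v q)) w = s * cnj s"
      unfolding quad_def s_def by (simp add: sum_product algebra_simps)
    also have "\<dots> = of_real ((cmod s)^2)" by (metis complex_norm_square of_real_power)
    finally show ?thesis by simp
  qed
  ultimately show ?thesis unfolding psd_def by blast
qed

lemma quad_trace: "quad m n Z v = trace_prod m n (\<lambda>p q. v p * cnj (v q)) Z"
  unfolding quad_def trace_prod_def
  by (subst sum.swap) (simp add: algebra_simps)

theorem proposition10:
  fixes m :: nat and n :: "nat \<Rightarrow> nat" and C :: "gamble set"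
  assumes "\<forall>j<m. 0 < n j"
    and "P_coherent m n C"
  shows "dual_cone m n C =
    {L. linear_on (LR m n) L \<and> psd m n (Zmat m n L) \<and>
        (\<forall>G. hermitian m n G \<and> gG m n G \<in> C \<longrightarrow> 0 \<le> Re (trace_prod m n G (Zmat m n L)))}"
proof (rule set_eqI, rule iffI)
  fix L assume "L \<in> dual_cone m n C"
  then have lin: "linear_on (LR m n) L" and pos: "\<forall>g\<in>C. 0 \<le> L g" unfolding dual_cone_def by auto
  have herm: "hermitian m n (Zmat m n L)"
    unfolding hermitian_def
  proof (intro ballI)
    fix i k assume i: "i \<in> Idx m n" and k: "k \<in> Idx m n"
    have re: "entry_re m n i k = entry_re m n k i"
      unfolding entry_re_def by (rule ext) (simp add: mult.commute)
    have im: "entry_im m n i k = (\<lambda>x. (-1) * entry_im m n k i x + 0 * entry_im m n k i x)"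
      unfolding entry_im_def by (rule ext) (simp add: mult.commute)
    have "L (entry_im m n i k) = - L (entry_im m n k i)"
      unfolding im using L_lin[OF lin tens_in_LR_im[OF k i] tens_in_LR_im[OF k i], of "-1" 0] by simp
    then show "Zmat m n L i k = cnj (Zmat m n L k i)"
      unfolding Zmat_def re by (simp add: complex_eq_iff)
  qed
  have "0 \<le> Re (quad m n (Zmat m n L) v)" for v
  proof -
    have "gG m n (\<lambda>p q. v p * cnj (v q)) \<in> C"
      using assms(2) outer_psd[of m n v] unfolding P_coherent_def SigmaGe_def by blast
    then have "0 \<le> L (gG m n (\<lambda>p q. v p * cnj (v q)))" using pos by blast
    then show ?thesis unfolding quad_trace L_gG[OF lin] .
  qed
  with herm have "psd m n (Zmat m n L)" unfolding psd_def by blast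
  moreover have "\<forall>G. hermitian m n G \<and> gG m n G \<in> C \<longrightarrow> 0 \<le> Re (trace_prod m n G (Zmat m n L))"
    using pos L_gG[OF lin] by metis
  ultimately show "L \<in> {L. linear_on (LR m n) L \<and> psd m n (Zmat m n L) \<and>
        (\<forall>G. hermitian m n G \<and> gG m n G \<in> C \<longrightarrow> 0 \<le> Re (trace_prod m n G (Zmat m n L)))}"
    using lin by blast
next
  fix L assume "L \<in> {L. linear_on (LR m n) L \<and> psd m n (Zmat m n L) \<and>
        (\<forall>G. hermitian m n G \<and> gG m n G \<in> C \<longrightarrow> 0 \<le> Re (trace_prod m n G (Zmat m n L)))}"
  then have lin: "linear_on (LR m n) L"
    and H: "\<forall>G. hermitian m n G \<and> gG m n G \<in> C \<longrightarrow> 0 \<le> Re (trace_prod m n G (Zmat m n L))" by auto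
  have "0 \<le> L g" if g: "g \<in> C" for g
  proof -
    have "g \<in> LR m n" using g assms(2) unfolding P_coherent_def by blast
    then obtain G where G: "hermitian m n G" "g = gG m n G" unfolding LR_def by blast
    show ?thesis using H G g L_gG[OF lin, of G] by simp
  qed
  then show "L \<in> dual_cone m n C" unfolding dual_cone_def using lin by blast
qed

end
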